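(* Let $G=(V,E)$ be a finite simple connected graph of order $n\geq 2$, and let $S(G)$ be its splitting graph. Then $\beta_0(S(G)) = n+\beta^*_0(G)$.
   Context: For a finite simple graph $G=(V,E)$, the splitting graph $S(G)$ is obtained from $G$ by adding, for each vertex $v\in V$, a new vertex $v'$, and joining $v'$ to a vertex $u\in V$ if and only if $uv\in E$ (the new vertices are pairwise non-adjacent; the edges of $G$ are kept). $\beta_0(H)$ denotes the independence number of a graph $H$ (maximum size of an independent set). For a graph $G$ of order $n\geq 2$, $\beta_0^*(G):=\max\{|S|-|N(S)| : S \text{ is an independent set of } G\}$, where $N(S)$ is the set of vertices of $G$ adjacent to some vertex of $S$ (the empty set counts as an independent set). *)

theory Defs
  imports Main
begin

definition simple_graph :: "'a set \<Rightarrow> ('a \<Rightarrow> 'a \<Rightarrow> bool) \<Rightarrow> bool" where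
  "simple_graph V E \<longleftrightarrow> finite V \<and> (\<forall>u v. E u v \<longrightarrow> u \<in> V \<and> v \<in> V)
     \<and> (\<forall>u v. E u v \<longrightarrow> E v u) \<and> (\<forall>v. \<not> E v v)"

definition connected_graph :: "'a set \<Rightarrow> ('a \<Rightarrow> 'a \<Rightarrow> bool) \<Rightarrow> bool" where
  "connected_graph V E \<longleftrightarrow> (\<forall>u\<in>V. \<forall>v\<in>V. E\<^sup>*\<^sup>* u v)"

definition independent_set :: "'a set \<Rightarrow> ('a \<Rightarrow> 'a \<Rightarrow> bool) \<Rightarrow> 'a set \<Rightarrow> bool" where
  "independent_set V E S \<longleftrightarrow> S \<subseteq> V \<and> (\<forall>u\<in>S. \<forall>v\<in>S. \<not> E u v)"

definition indep_number :: "'a set \<Rightarrow> ('a \<Rightarrow> 'a \<Rightarrow> bool) \<Rightarrow> nat" where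
  "indep_number V E = Max {card S | S. independent_set V E S}"

definition nbhd :: "'a set \<Rightarrow> ('a \<Rightarrow> 'a \<Rightarrow> bool) \<Rightarrow> 'a set \<Rightarrow> 'a set" where
  "nbhd V E S = {v\<in>V. \<exists>u\<in>S. E u v}"

definition beta0_star :: "'a set \<Rightarrow> ('a \<Rightarrow> 'a \<Rightarrow> bool) \<Rightarrow> int" where
  "beta0_star V E = Max {int (card S) - int (card (nbhd V E S)) | S. independent_set V E S}"

text \<open>Splitting graph: original vertex v is Inl v, its copy v' is Inr v.\<close>
definition split_vertices :: "'a set \<Rightarrow> ('a + 'a) set" where
  "split_vertices V = Inl ` V \<union> Inr ` V"

fun split_edges :: "('a \<Rightarrow> 'a \<Rightarrow> bool) \<Rightarrow> ('a + 'a) \<Rightarrow> ('a + 'a) \<Rightarrow> bool" where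
  "split_edges E (Inl u) (Inl v) = E u v"
| "split_edges E (Inl u) (Inr v) = E u v"
| "split_edges E (Inr u) (Inl v) = E u v"
| "split_edges E (Inr u) (Inr v) = False"

end

theory Submission
  imports Defs
begin

lemma split_card:
  fixes T :: "('a + 'a) set"
  assumes "finite T"
  shows "card T = card (Inl -` T) + card (Inr -` T)"
proof -
  have eq: "T = Inl ` (Inl -` T) \<union> Inr ` (Inr -` T)"
  proof
    show "T \<subseteq> Inl ` (Inl -` T) \<union> Inr ` (Inr -` T)"
    proof
      fix x assume "x \<in> T" then show "x \<in> Inl ` (Inl -` T) \<union> Inr ` (Inr -` T)"
        by (cases x) auto
    qed
  qed auto
  have f1: "finite (Inl -` T)" using assms by (simp add: finite_vimageI)
  have f2: "finite (Inr -` T)" using assms by (simp add: finite_vimageI)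
  have "card T = card (Inl ` (Inl -` T) :: ('a+'a) set) + card (Inr ` (Inr -` T) :: ('a+'a) set)"
  proof -
    have "card (Inl ` (Inl -` T) \<union> Inr ` (Inr -` T)) = card (Inl ` (Inl -` T) :: ('a+'a) set) + card (Inr ` (Inr -` T) :: ('a+'a) set)"
      by (rule card_Un_disjoint) (use assms in auto)
    then show ?thesis using arg_cong[of _ _ card, OF eq] by simp
  qed
  also have "\<dots> = card (Inl -` T) + card (Inr -` T)"
    using card_image[OF inj_on_subset[OF inj_Inl subset_UNIV]] card_image[OF inj_on_subset[OF inj_Inr subset_UNIV]] by (metis (no_types))
  finally show ?thesis .
qed

lemma upper:
  assumes sg: "simple_graph V E"
    and T: "independent_set (split_vertices V) (split_edges E) T"
  shows "int (card T) \<le> int (card V) + (int (card (Inl -` T)) - int (card (nbhd V E (Inl -` T))))"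
proof -
  have fin: "finite V" using sg unfolding simple_graph_def by auto
  have TS: "T \<subseteq> split_vertices V" using T unfolding independent_set_def by auto
  have fT: "finite T" using TS fin unfolding split_vertices_def by (meson finite_Un finite_imageI finite_subset)
  have B: "Inr -` T \<subseteq> V - nbhd V E (Inl -` T)"
  proof
    fix b assume b: "b \<in> Inr -` T"
    then have "b \<in> V" using TS unfolding split_vertices_def by auto
    moreover have "b \<notin> nbhd V E (Inl -` T)"
    proof
      assume "b \<in> nbhd V E (Inl -` T)"
      then obtain a where "Inl a \<in> T" "E a b" unfolding nbhd_def by auto
      then have "split_edges E (Inl a) (Inr b)" "Inl a \<in> T" "Inr b \<in> T" using b by auto
      with T show False unfolding independent_set_def by blast
    qed
    ultimately show "b \<in> V - nbhd V E (Inl -` T)" by auto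
  qed
  have nb: "nbhd V E (Inl -` T) \<subseteq> V" unfolding nbhd_def by auto
  have "card (Inr -` T) \<le> card (V - nbhd V E (Inl -` T))"
    using B fin by (intro card_mono) auto
  also have "\<dots> = card V - card (nbhd V E (Inl -` T))"
    using nb fin by (simp add: card_Diff_subset finite_subset)
  finally have c: "card (Inr -` T) \<le> card V - card (nbhd V E (Inl -` T))" .
  have "card (nbhd V E (Inl -` T)) \<le> card V" using nb fin by (simp add: card_mono)
  with c split_card[OF fT] show ?thesis by linarith
qed

lemma lower:
  assumes sg: "simple_graph V E"
    and A: "independent_set V E A"
  shows "\<exists>T. independent_set (split_vertices V) (split_edges E) T \<and>
     int (card T) = int (card V) + (int (card A) - int (card (nbhd V E A)))"
proof -
  have fin: "finite V" using sg unfolding simple_graph_def by auto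
  define T where "T = Inl ` A \<union> Inr ` (V - nbhd V E A)"
  have AV: "A \<subseteq> V" using A unfolding independent_set_def by auto
  have ind: "independent_set (split_vertices V) (split_edges E) T"
    unfolding independent_set_def
  proof (intro conjI ballI)
    show "T \<subseteq> split_vertices V" using AV unfolding T_def split_vertices_def by auto
  next
    fix u v assume u: "u \<in> T" and v: "v \<in> T"
    show "\<not> split_edges E u v"
    proof (cases u; cases v)
      fix a b assume "u = Inl a" "v = Inl b"
      then show ?thesis using u v A unfolding T_def independent_set_def by auto
    next
      fix a b assume "u = Inl a" "v = Inr b"
      then show ?thesis using u v AV unfolding T_def nbhd_def by auto
    next
      fix a b assume "u = Inr a" "v = Inl b"
      then show ?thesis using u v AV sg unfolding T_def nbhd_def simple_graph_def by auto blast
    next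
      fix a b assume "u = Inr a" "v = Inr b"
      then show ?thesis by simp
    qed
  qed
  have nb: "nbhd V E A \<subseteq> V" unfolding nbhd_def by auto
  have fA: "finite A" using AV fin finite_subset by auto
  have "card T = card (Inl ` A :: ('a+'a) set) + card (Inr ` (V - nbhd V E A) :: ('a+'a) set)"
    unfolding T_def using card_Un_disjoint[of "Inl ` A :: ('a+'a) set" "Inr ` (V - nbhd V E A)"] fA fin by auto
  also have "\<dots> = card A + (card V - card (nbhd V E A))"
    using nb fin by (simp add: card_image card_Diff_subset finite_subset)
  finally have "card T = card A + (card V - card (nbhd V E A))" .
  moreover have "card (nbhd V E A) \<le> card V" using nb fin by (simp add: card_mono)
  ultimately show ?thesis using ind by (intro exI[of _ T]) auto
qed

theorem theorem1:
  fixes V :: "'a set" and E :: "'a \<Rightarrow> 'a \<Rightarrow> bool"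
  assumes "simple_graph V E" and "connected_graph V E" and "card V \<ge> 2"
  shows "int (indep_number (split_vertices V) (split_edges E)) = int (card V) + beta0_star V E"
proof -
  let ?SV = "split_vertices V" and ?SE = "split_edges E"
  have fin: "finite V" using assms(1) unfolding simple_graph_def by auto
  have fSV: "finite ?SV" using fin unfolding split_vertices_def by auto
  define X where "X = {card T | T. independent_set ?SV ?SE T}"
  define Y where "Y = {int (card S) - int (card (nbhd V E S)) | S. independent_set V E S}"
  have fX: "finite X" unfolding X_def independent_set_def
    using fSV by (intro finite_subset[OF _ finite_imageI[OF finite_Pow_iff[THEN iffD2, OF fSV], of card]]) auto
  have fY: "finite Y" unfolding Y_def independent_set_def
    using fin by (intro finite_subset[OF _ finite_imageI[OF finite_Pow_iff[THEN iffD2, OF fin],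
      of "\<lambda>S. int (card S) - int (card (nbhd V E S))"]]) auto
  have e1: "independent_set ?SV ?SE {}" unfolding independent_set_def by auto
  have e2: "independent_set V E {}" unfolding independent_set_def by auto
  have nX: "X \<noteq> {}" using e1 unfolding X_def by auto
  have nY: "Y \<noteq> {}" using e2 unfolding Y_def by auto
  have le1: "int (Max X) \<le> int (card V) + Max Y"
  proof -
    obtain T where T: "independent_set ?SV ?SE T" "Max X = card T"
      using Max_in[OF fX nX] unfolding X_def by auto
    have "Inl -` T \<subseteq> V" using T(1) unfolding independent_set_def split_vertices_def by auto
    moreover have "\<forall>u\<in>Inl -` T. \<forall>v\<in>Inl -` T. \<not> E u v"
    proof (intro ballI)
      fix u v assume "u \<in> Inl -` T" "v \<in> Inl -` T"
      then have "Inl u \<in> T" "Inl v \<in> T" by auto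
      then have "\<not> split_edges E (Inl u) (Inl v)" using T(1) unfolding independent_set_def by blast
      then show "\<not> E u v" by simp
    qed
    ultimately have "independent_set V E (Inl -` T)" unfolding independent_set_def by auto
    then have "int (card (Inl -` T)) - int (card (nbhd V E (Inl -` T))) \<in> Y" unfolding Y_def by auto
    then have "int (card (Inl -` T)) - int (card (nbhd V E (Inl -` T))) \<le> Max Y"
      using fY by auto
    with upper[OF assms(1) T(1)] T(2) show ?thesis by linarith
  qed
  have le2: "int (card V) + Max Y \<le> int (Max X)"
  proof -
    obtain S where S: "independent_set V E S" "Max Y = int (card S) - int (card (nbhd V E S))"
      using Max_in[OF fY nY] unfolding Y_def by auto
    obtain T where T: "independent_set ?SV ?SE T"
        "int (card T) = int (card V) + (int (card S) - int (card (nbhd V E S)))"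
      using lower[OF assms(1) S(1)] by auto
    have "card T \<in> X" using T(1) unfolding X_def by auto
    then have "card T \<le> Max X" using fX by auto
    with T(2) S(2) show ?thesis by linarith
  qed
  show ?thesis using le1 le2 unfolding indep_number_def beta0_star_def X_def[symmetric] Y_def[symmetric]
    by linarith
qed

end
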